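(* For all $0<b<B\le1$ and every integer $n\ge2$, letting $k=\min\big(\lfloor 1/b+1/2\rfloor,\ \lceil 2B/b\rceil-1,\ n\big)$, $$\max\Big(2-b,\ \frac{k\,(2-k b)}{2-b}\Big)\le\textsc{PoF-Profit-Submodular}(b,B)\le\min\big(\lceil 2B/b\rceil-1,\,n\big).$$
   Context: An instance $\langle A,f,c\rangle$ consists of a finite set $A$ of agents, a monotone nondecreasing $f:2^A\to[0,1]$, and costs $c_i\ge0$. For $S\subseteq A$, $i\in S$: $f_S(i)=f(S)-f(S\setminus\{i\})$; $p(S)=\sum_{i\in S}c_i/f_S(i)$ (conventions: $0$ if $c_i=0=f_S(i)$, $\infty$ if $c_i>0=f_S(i)$); the profit is $g(S)=(1-p(S))f(S)$. $f$ is submodular if $f_S(i)\ge f_{S'}(i)$ whenever $S\subseteq S'$, $i\in S$. $\textsc{Max-Profit}(B)=\max\{g(S):p(S)\le B\}$. $\textsc{PoF-Profit-Submodular}(b,B)$ is the supremum of $\textsc{Max-Profit}(B)/\textsc{Max-Profit}(b)$ over all instances with submodular $f$, at most $n$ agents, and $\max_{i\in A}p(\{i\})\le b$. *)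

theory Defs
  imports Complex_Main "HOL-Library.Extended_Real"
begin

(* Agents are natural numbers (WLOG: any finite agent set embeds into nat).
   An instance is (A, f, c) with A a finite set of agents, f defined on subsets of A. *)

definition marg :: "(nat set \<Rightarrow> real) \<Rightarrow> nat set \<Rightarrow> nat \<Rightarrow> real" where
  "marg f S i = f S - f (S - {i})"

definition pay :: "(nat set \<Rightarrow> real) \<Rightarrow> (nat \<Rightarrow> real) \<Rightarrow> nat set \<Rightarrow> ereal" where
  "pay f c S = (\<Sum>i\<in>S. if marg f S i = 0 then (if c i = 0 then 0 else \<infinity>)
                         else ereal (c i / marg f S i))"

(* profit g(S) = (1 - p(S)) f(S); only used for sets with finite payment *)
definition profit :: "(nat set \<Rightarrow> real) \<Rightarrow> (nat \<Rightarrow> real) \<Rightarrow> nat set \<Rightarrow> real" where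
  "profit f c S = (1 - real_of_ereal (pay f c S)) * f S"

definition max_profit :: "nat set \<Rightarrow> (nat set \<Rightarrow> real) \<Rightarrow> (nat \<Rightarrow> real) \<Rightarrow> real \<Rightarrow> real" where
  "max_profit A f c B = Max (profit f c ` {S. S \<subseteq> A \<and> pay f c S \<le> ereal B})"

definition valid_instance :: "nat set \<Rightarrow> (nat set \<Rightarrow> real) \<Rightarrow> (nat \<Rightarrow> real) \<Rightarrow> bool" where
  "valid_instance A f c \<longleftrightarrow> finite A
     \<and> (\<forall>S\<subseteq>A. 0 \<le> f S \<and> f S \<le> 1)
     \<and> (\<forall>S T. S \<subseteq> T \<and> T \<subseteq> A \<longrightarrow> f S \<le> f T)
     \<and> (\<forall>i\<in>A. 0 \<le> c i)"

definition submodular_on :: "nat set \<Rightarrow> (nat set \<Rightarrow> real) \<Rightarrow> bool" where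
  "submodular_on A f \<longleftrightarrow> (\<forall>S S' i. S \<subseteq> S' \<and> S' \<subseteq> A \<and> i \<in> S \<longrightarrow> marg f S i \<ge> marg f S' i)"

definition pof_profit_submodular :: "nat \<Rightarrow> real \<Rightarrow> real \<Rightarrow> ereal" where
  "pof_profit_submodular n b B =
     (SUP I \<in> {(A, f, c). valid_instance A f c \<and> submodular_on A f \<and> card A \<le> n
                \<and> (\<forall>i\<in>A. pay f c {i} \<le> ereal b)}.
        (case I of (A, f, c) \<Rightarrow> ereal (max_profit A f c B / max_profit A f c b)))"

end

theory Submission imports Defs begin

lemma vi_mono:
  assumes "valid_instance A f c" "S \<subseteq> T" "T \<subseteq> A"
  shows "f S \<le> f T"
  using assms unfolding valid_instance_def by (meson)

lemma vi_fin: "valid_instance A f c \<Longrightarrow> finite A"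
  unfolding valid_instance_def by simp

lemma vi_range: "valid_instance A f c \<Longrightarrow> S \<subseteq> A \<Longrightarrow> 0 \<le> f S \<and> f S \<le> 1"
  unfolding valid_instance_def by simp

lemma vi_cost: "valid_instance A f c \<Longrightarrow> i \<in> A \<Longrightarrow> 0 \<le> c i"
  unfolding valid_instance_def by simp

lemma sm_D: "submodular_on A f \<Longrightarrow> S \<subseteq> S' \<Longrightarrow> S' \<subseteq> A \<Longrightarrow> i \<in> S \<Longrightarrow> marg f S' i \<le> marg f S i"
  unfolding submodular_on_def by simp

lemma marg_nonneg:
  assumes "valid_instance A f c" "S \<subseteq> A"
  shows "0 \<le> marg f S i"
proof -
  have "f (S - {i}) \<le> f S" using vi_mono[OF assms(1) _ assms(2), of "S - {i}"] by auto
  then show ?thesis unfolding marg_def by simp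
qed

lemma pay_nonneg:
  assumes "valid_instance A f c" "S \<subseteq> A"
  shows "0 \<le> pay f c S"
  unfolding pay_def
proof (rule sum_nonneg)
  fix i assume "i \<in> S"
  then have "0 \<le> c i" using assms vi_cost by blast
  moreover have "0 \<le> marg f S i" using marg_nonneg[OF assms] .
  ultimately show "0 \<le> (if marg f S i = 0 then if c i = 0 then 0 else \<infinity> else ereal (c i / marg f S i))"
    by simp
qed

lemma subadd2:
  assumes v: "valid_instance A f c" and sm: "submodular_on A f"
    and fin: "finite Y" and sub: "X \<union> Y \<subseteq> A" and dj: "X \<inter> Y = {}"
  shows "f (X \<union> Y) + f {} \<le> f X + f Y"
  using fin sub dj
proof (induction Y rule: finite_induct)
  case empty then show ?case by simp
next
  case (insert y Y)
  have s1: "X \<union> Y \<subseteq> A" using insert.prems(1) by blast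
  have s2: "X \<inter> Y = {}" using insert.prems(2) by blast
  have IH: "f (X \<union> Y) + f {} \<le> f X + f Y" using insert.IH[OF s1 s2] .
  have "marg f (X \<union> insert y Y) y \<le> marg f (insert y Y) y"
    by (rule sm_D[OF sm]) (use insert.prems(1) in auto)
  moreover have "(X \<union> insert y Y) - {y} = X \<union> Y" using insert.hyps(2) insert.prems(2) by blast
  moreover have "insert y Y - {y} = Y" using insert.hyps(2) by blast
  ultimately have "f (X \<union> insert y Y) - f (X \<union> Y) \<le> f (insert y Y) - f Y"
    unfolding marg_def by simp
  then show ?case using IH by simp
qed

lemma subadd_family:
  assumes v: "valid_instance A f c" and sm: "submodular_on A f"
    and fin: "finite P" and ne: "P \<noteq> {}" and sub: "\<Union>P \<subseteq> A"
    and dj: "\<forall>U\<in>P. \<forall>V\<in>P. U \<noteq> V \<longrightarrow> U \<inter> V = {}"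
  shows "f (\<Union>P) \<le> (\<Sum>U\<in>P. f U)"
  using fin ne sub dj
proof (induction P rule: finite_ne_induct)
  case (singleton x) then show ?case by simp
next
  case (insert U P)
  have s1: "\<Union>P \<subseteq> A" using insert.prems(1) by auto
  have s2: "\<forall>U\<in>P. \<forall>V\<in>P. U \<noteq> V \<longrightarrow> U \<inter> V = {}" using insert.prems(2) by blast
  have IH: "f (\<Union>P) \<le> (\<Sum>U\<in>P. f U)" using insert.IH[OF s1 s2] .
  have "finite (\<Union>P)" using vi_fin[OF v] s1 finite_subset by blast
  moreover have "U \<inter> \<Union>P = {}"
  proof -
    have "U \<inter> V = {}" if "V \<in> P" for V
    proof -
      have "V \<noteq> U" using that insert.hyps(3) by blast
      moreover have "U \<in> insert U P" "V \<in> insert U P" using that by simp_all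
      ultimately show ?thesis using insert.prems(2) by metis
    qed
    then show ?thesis by (simp add: Int_Union)
  qed
  moreover have "U \<union> \<Union>P \<subseteq> A" using insert.prems(1) by auto
  ultimately have "f (U \<union> \<Union>P) + f {} \<le> f U + f (\<Union>P)"
    using subadd2[OF v sm, of "\<Union>P" U] by blast
  moreover have "0 \<le> f {}" using vi_range[OF v] by blast
  moreover have "(\<Sum>U\<in>insert U P. f U) = f U + (\<Sum>U\<in>P. f U)" using insert.hyps(1,3) by simp
  ultimately show ?case using IH by simp
qed


definition wt :: "(nat set \<Rightarrow> real) \<Rightarrow> (nat \<Rightarrow> real) \<Rightarrow> nat set \<Rightarrow> nat \<Rightarrow> real" where
  "wt f c S i = c i / marg f S i"

definition pt :: "(nat set \<Rightarrow> real) \<Rightarrow> (nat \<Rightarrow> real) \<Rightarrow> nat set \<Rightarrow> nat \<Rightarrow> ereal" where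
  "pt f c S i = (if marg f S i = 0 then if c i = 0 then 0 else \<infinity> else ereal (c i / marg f S i))"

lemma pay_pt: "pay f c S = sum (pt f c S) S"
  unfolding pay_def pt_def by simp

lemma term_nonneg:
  assumes "valid_instance A f c" "S \<subseteq> A" "i \<in> S"
  shows "0 \<le> pt f c S i"
proof -
  have "0 \<le> c i" using assms vi_cost by blast
  moreover have "0 \<le> marg f S i" using marg_nonneg[OF assms(1,2)] .
  ultimately show ?thesis unfolding pt_def by simp
qed

lemma pay_finite_zero:
  assumes v: "valid_instance A f c" and S: "S \<subseteq> A" and pf: "pay f c S \<noteq> \<infinity>"
    and i: "i \<in> S" and m: "marg f S i = 0"
  shows "c i = 0"
proof (rule ccontr)
  assume "c i \<noteq> 0"
  then have t: "pt f c S i = \<infinity>"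
    using m unfolding pt_def by simp
  have fS: "finite S" using vi_fin[OF v] S finite_subset by blast
  have "pay f c S = pt f c S i + sum (pt f c S) (S - {i})"
    unfolding pay_pt using sum.remove[OF fS i] by blast
  moreover have "0 \<le> sum (pt f c S) (S - {i})"
    by (rule sum_nonneg) (use term_nonneg[OF v S] in blast)
  ultimately have "pay f c S = \<infinity>" using t by simp
  then show False using pf by simp
qed

lemma pay_eq_wt:
  assumes v: "valid_instance A f c" and S: "S \<subseteq> A" and pf: "pay f c S \<noteq> \<infinity>"
  shows "pay f c S = ereal (sum (wt f c S) S)"
proof -
  have "pay f c S = (\<Sum>i\<in>S. ereal (wt f c S i))"
    unfolding pay_def
  proof (rule sum.cong[OF refl])
    fix i assume i: "i \<in> S"
    show "(if marg f S i = 0 then if c i = 0 then 0 else \<infinity> else ereal (c i / marg f S i)) = ereal (wt f c S i)"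
    proof (cases "marg f S i = 0")
      case True
      then have "c i = 0" using pay_finite_zero[OF v S pf i] by blast
      then show ?thesis using True unfolding wt_def by simp
    next
      case False
      then show ?thesis unfolding wt_def by simp
    qed
  qed
  also have "\<dots> = ereal (sum (wt f c S) S)" by (simp add: sum_ereal)
  finally show ?thesis .
qed

lemma wt_nonneg:
  assumes v: "valid_instance A f c" and S: "S \<subseteq> A" and i: "i \<in> S"
  shows "0 \<le> wt f c S i"
proof -
  have "0 \<le> c i" using v S i vi_cost by blast
  moreover have "0 \<le> marg f S i" using marg_nonneg[OF v S] .
  ultimately show ?thesis unfolding wt_def by simp
qed

lemma pay_sub:
  assumes v: "valid_instance A f c" and sm: "submodular_on A f" and S: "S \<subseteq> A"
    and pf: "pay f c S \<noteq> \<infinity>" and U: "U \<subseteq> S"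
  shows "pay f c U \<le> ereal (sum (wt f c S) U)"
proof -
  have "pay f c U \<le> (\<Sum>i\<in>U. ereal (wt f c S i))"
    unfolding pay_def
  proof (rule sum_mono)
    fix i assume i: "i \<in> U"
    have iS: "i \<in> S" using i U by blast
    have ci: "0 \<le> c i" using v S iS vi_cost by blast
    have mS: "0 \<le> marg f S i" using marg_nonneg[OF v S] .
    have mU: "marg f S i \<le> marg f U i" using sm_D[OF sm U S i] .
    have w0: "0 \<le> wt f c S i" using wt_nonneg[OF v S iS] .
    show "(if marg f U i = 0 then if c i = 0 then 0 else \<infinity> else ereal (c i / marg f U i)) \<le> ereal (wt f c S i)"
    proof (cases "marg f S i = 0")
      case True
      then have "c i = 0" using pay_finite_zero[OF v S pf iS] by blast
      then show ?thesis using w0 by simp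
    next
      case False
      then have pos: "0 < marg f S i" using mS by simp
      then have "marg f U i \<noteq> 0" using mU by simp
      moreover have "c i / marg f U i \<le> c i / marg f S i"
        using divide_left_mono[OF mU ci] pos mU by simp
      ultimately show ?thesis unfolding wt_def by simp
    qed
  qed
  also have "\<dots> = ereal (sum (wt f c S) U)" by (simp add: sum_ereal)
  finally show ?thesis .
qed

lemma profit_lower:
  assumes v: "valid_instance A f c" and U: "U \<subseteq> A" and p: "pay f c U \<le> ereal x"
  shows "(1 - x) * f U \<le> profit f c U"
proof -
  have p0: "0 \<le> pay f c U" using pay_nonneg[OF v U] .
  obtain y where y: "pay f c U = ereal y" using p p0 by (cases "pay f c U") auto
  have "0 \<le> y" "y \<le> x" using p p0 y by auto
  moreover have "0 \<le> f U" using vi_range[OF v U] by blast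
  ultimately have "(1 - x) * f U \<le> (1 - y) * f U" by (simp add: mult_right_mono)
  then show ?thesis unfolding profit_def y by simp
qed


definition okpart :: "nat set \<Rightarrow> (nat \<Rightarrow> real) \<Rightarrow> real \<Rightarrow> nat set set \<Rightarrow> bool" where
  "okpart S w b P \<longleftrightarrow> finite P \<and> (\<forall>U\<in>P. U \<subseteq> S) \<and> \<Union>P = S
     \<and> (\<forall>U\<in>P. \<forall>V\<in>P. U \<noteq> V \<longrightarrow> U \<inter> V = {}) \<and> (\<forall>U\<in>P. card U = 1 \<or> sum w U \<le> b)"

lemma part_bound:
  assumes v: "valid_instance A f c" and sm: "submodular_on A f" and S: "S \<subseteq> A"
    and pS: "pay f c S \<le> ereal B" and ne: "S \<noteq> {}"
    and P: "okpart S (wt f c S) b P"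
    and single: "\<forall>i\<in>A. pay f c {i} \<le> ereal b"
    and M: "\<And>T. T \<subseteq> A \<Longrightarrow> pay f c T \<le> ereal b \<Longrightarrow> profit f c T \<le> M"
  shows "profit f c S \<le> real (card P) * M"
proof -
  define w where "w = wt f c S"
  have pf: "pay f c S \<noteq> \<infinity>" using pS by auto
  have fS: "finite S" using vi_fin[OF v] S finite_subset by blast
  have Pfin: "finite P" and Psub: "\<forall>U\<in>P. U \<subseteq> S" and PU: "\<Union>P = S"
    and Pdj: "\<forall>U\<in>P. \<forall>V\<in>P. U \<noteq> V \<longrightarrow> U \<inter> V = {}"
    and Pok: "\<forall>U\<in>P. card U = 1 \<or> sum w U \<le> b"
    using P unfolding okpart_def w_def by blast+
  have Ufin: "\<forall>U\<in>P. finite U" using Psub fS finite_subset by blast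
  have Pne: "P \<noteq> {}" using PU ne by auto
  have prS: "profit f c S = (1 - sum w S) * f S"
    unfolding profit_def w_def using pay_eq_wt[OF v S pf] by simp
  have sumS: "sum w S = (\<Sum>U\<in>P. sum w U)"
    using sum.Union_disjoint[OF Ufin Pdj, of w] PU by simp
  have fsub: "f S \<le> (\<Sum>U\<in>P. f U)"
    using subadd_family[OF v sm Pfin Pne _ Pdj] PU S by simp
  have "(\<Sum>U\<in>P. f U * sum w U) \<le> (\<Sum>U\<in>P. f S * sum w U)"
  proof (rule sum_mono)
    fix U assume U: "U \<in> P"
    have "U \<subseteq> S" using U Psub by blast
    then have "f U \<le> f S" using vi_mono[OF v _ S] by blast
    moreover have "0 \<le> sum w U"
      using wt_nonneg[OF v S] \<open>U \<subseteq> S\<close> unfolding w_def by (meson subsetD sum_nonneg)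
    ultimately show "f U * sum w U \<le> f S * sum w U" by (simp add: mult_right_mono)
  qed
  also have "\<dots> = f S * sum w S" using sumS by (simp add: sum_distrib_left)
  finally have fw: "(\<Sum>U\<in>P. f U * sum w U) \<le> f S * sum w S" .
  have "profit f c S \<le> (\<Sum>U\<in>P. f U) - (\<Sum>U\<in>P. f U * sum w U)"
    using prS fsub fw by (simp add: algebra_simps)
  also have "\<dots> = (\<Sum>U\<in>P. (1 - sum w U) * f U)"
    by (simp add: sum_subtractf algebra_simps)
  also have "\<dots> \<le> (\<Sum>U\<in>P. M)"
  proof (rule sum_mono)
    fix U assume U: "U \<in> P"
    have US: "U \<subseteq> S" using U Psub by blast
    have UA: "U \<subseteq> A" using US S by blast
    have pU: "pay f c U \<le> ereal (sum w U)" using pay_sub[OF v sm S pf US] unfolding w_def .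
    have feas: "pay f c U \<le> ereal b"
    proof (cases "card U = 1")
      case True
      then obtain i where "U = {i}" by (meson card_1_singletonE)
      then show ?thesis using single UA by auto
    next
      case False
      then have "sum w U \<le> b" using Pok U by blast
      then show ?thesis using pU by (meson ereal_less_eq(3) order_trans)
    qed
    have "(1 - sum w U) * f U \<le> profit f c U" using profit_lower[OF v UA pU] .
    also have "\<dots> \<le> M" using M[OF UA feas] .
    finally show "(1 - sum w U) * f U \<le> M" .
  qed
  also have "\<dots> = real (card P) * M" by simp
  finally show ?thesis .
qed


lemma merge_step:
  assumes fS: "finite S" and P: "okpart S w b P" and U: "U \<in> P" and V: "V \<in> P" and UV: "U \<noteq> V"
    and le: "sum w U + sum w V \<le> b"
  shows "okpart S w b (insert (U \<union> V) (P - {U, V})) \<and> card (insert (U \<union> V) (P - {U, V})) < card P"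
proof -
  have Pfin: "finite P" and Psub: "\<forall>U\<in>P. U \<subseteq> S" and PU: "\<Union>P = S"
    and Pdj: "\<forall>U\<in>P. \<forall>V\<in>P. U \<noteq> V \<longrightarrow> U \<inter> V = {}"
    and Pok: "\<forall>U\<in>P. card U = 1 \<or> sum w U \<le> b"
    using P unfolding okpart_def by blast+
  define Q where "Q = P - {U, V}"
  have dUV: "U \<inter> V = {}" using Pdj U V UV by blast
  have fU: "finite U" "finite V" using Psub U V fS finite_subset by blast+
  have sUV: "sum w (U \<union> V) = sum w U + sum w V" using sum.union_disjoint[OF fU dUV] .
  have Qsub: "Q \<subseteq> P" unfolding Q_def by blast
  have dQ: "\<forall>W\<in>Q. (U \<union> V) \<inter> W = {}"
  proof
    fix W assume W: "W \<in> Q"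
    then have "W \<in> P" "W \<noteq> U" "W \<noteq> V" unfolding Q_def by auto
    then have "U \<inter> W = {}" "V \<inter> W = {}" using Pdj U V by metis+
    then show "(U \<union> V) \<inter> W = {}" by blast
  qed
  have ok1: "finite (insert (U \<union> V) Q)" using Pfin Qsub finite_subset by blast
  have ok2: "\<forall>X\<in>insert (U \<union> V) Q. X \<subseteq> S" using Psub Qsub U V by blast
  have ok3: "\<Union>(insert (U \<union> V) Q) = S"
  proof -
    have "P = insert U (insert V Q)" unfolding Q_def using U V by blast
    then have "\<Union>P = U \<union> V \<union> \<Union>Q" by auto
    then show ?thesis using PU by auto
  qed
  have ok4: "\<forall>X\<in>insert (U \<union> V) Q. \<forall>Y\<in>insert (U \<union> V) Q. X \<noteq> Y \<longrightarrow> X \<inter> Y = {}"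
  proof (intro ballI impI)
    fix X Y assume X: "X \<in> insert (U \<union> V) Q" and Y: "Y \<in> insert (U \<union> V) Q" and XY: "X \<noteq> Y"
    show "X \<inter> Y = {}"
    proof (cases "X = U \<union> V")
      case True
      then have "Y \<in> Q" using Y XY by blast
      then show ?thesis using dQ True by blast
    next
      case False
      then have XQ: "X \<in> Q" using X by blast
      show ?thesis
      proof (cases "Y = U \<union> V")
        case True
        then show ?thesis using dQ XQ by blast
      next
        case False
        then have "Y \<in> Q" using Y by blast
        then show ?thesis using XQ Qsub Pdj XY by blast
      qed
    qed
  qed
  have ok5: "\<forall>X\<in>insert (U \<union> V) Q. card X = 1 \<or> sum w X \<le> b"
    using Pok Qsub sUV le by auto
  have "card Q = card P - 2"
  proof -
    have "{U, V} \<subseteq> P" using U V by blast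
    moreover have "card {U, V} = 2" using UV by simp
    ultimately show ?thesis unfolding Q_def using card_Diff_subset[of "{U,V}" P] by simp
  qed
  moreover have "2 \<le> card P"
  proof -
    have "{U, V} \<subseteq> P" using U V by blast
    then have "card {U, V} \<le> card P" using card_mono[OF Pfin] by blast
    then show ?thesis using UV by simp
  qed
  moreover have "card (insert (U \<union> V) Q) \<le> Suc (card Q)" using card_insert_le[of Q "U \<union> V"] ok1 by (simp add: card_insert_if)
  ultimately have "card (insert (U \<union> V) Q) < card P" by linarith
  then show ?thesis using ok1 ok2 ok3 ok4 ok5 unfolding okpart_def Q_def by blast
qed

lemma merge_exists:
  assumes fS: "finite S"
  shows "okpart S w b P \<Longrightarrow> \<exists>P'. okpart S w b P' \<and> (\<forall>U\<in>P'. \<forall>V\<in>P'. U \<noteq> V \<longrightarrow> b < sum w U + sum w V)"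
proof (induction "card P" arbitrary: P rule: less_induct)
  case less
  show ?case
  proof (cases "\<forall>U\<in>P. \<forall>V\<in>P. U \<noteq> V \<longrightarrow> b < sum w U + sum w V")
    case True
    then show ?thesis using less.prems by blast
  next
    case False
    then obtain U V where U: "U \<in> P" and V: "V \<in> P" and UV: "U \<noteq> V" and le: "sum w U + sum w V \<le> b"
      by (meson not_less)
    from merge_step[OF fS less.prems U V UV le] show ?thesis using less.hyps by blast
  qed
qed


lemma pair_count:
  fixes x :: "'a \<Rightarrow> real"
  assumes fin: "finite P" and two: "2 \<le> card P"
    and pr: "\<forall>U\<in>P. \<forall>V\<in>P. U \<noteq> V \<longrightarrow> b < x U + x V"
  shows "real (card P) * b < 2 * sum x P"
proof -
  define r where "r = card P"
  define X where "X = sum x P"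
  have inner: "(\<Sum>V\<in>P - {U}. x U + x V) = (real r - 1) * x U + (X - x U)" if U: "U \<in> P" for U
  proof -
    have c: "card (P - {U}) = r - 1" unfolding r_def using U fin by simp
    have "(\<Sum>V\<in>P - {U}. x U + x V) = real (card (P - {U})) * x U + sum x (P - {U})"
      by (simp add: sum.distrib)
    also have "sum x (P - {U}) = X - x U" unfolding X_def using sum_diff1[OF fin, of x U] U by simp
    also have "real (card (P - {U})) = real r - 1" using c two unfolding r_def by (simp add: of_nat_diff)
    finally show ?thesis .
  qed
  have Pne: "P \<noteq> {}" using two by auto
  have "(\<Sum>U\<in>P. \<Sum>V\<in>P - {U}. b) < (\<Sum>U\<in>P. \<Sum>V\<in>P - {U}. x U + x V)"
  proof (rule sum_strict_mono[OF fin Pne])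
    fix U assume U: "U \<in> P"
    have "P - {U} \<noteq> {}"
    proof
      assume "P - {U} = {}"
      then have "P \<subseteq> {U}" by blast
      then have "card P \<le> 1" using card_mono[of "{U}" P] by simp
      then show False using two by simp
    qed
    moreover have "finite (P - {U})" using fin by simp
    ultimately show "(\<Sum>V\<in>P - {U}. b) < (\<Sum>V\<in>P - {U}. x U + x V)"
    proof -
      have "b < x U + x V" if V: "V \<in> P - {U}" for V
      proof -
        have "V \<in> P" "U \<noteq> V" using V by auto
        then show ?thesis using pr U by simp
      qed
      then show ?thesis using sum_strict_mono[of "P - {U}" "\<lambda>V. b" "\<lambda>V. x U + x V"] \<open>finite (P - {U})\<close> \<open>P - {U} \<noteq> {}\<close> by simp
    qed
  qed
  also have "(\<Sum>U\<in>P. \<Sum>V\<in>P - {U}. x U + x V) = (\<Sum>U\<in>P. (real r - 1) * x U + (X - x U))"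
    using inner by (rule sum.cong[OF refl])
  also have "\<dots> = (real r - 1) * X + real r * X - X"
    unfolding X_def r_def by (simp add: sum.distrib sum_distrib_left sum_subtractf)
  finally have A: "(\<Sum>U\<in>P. \<Sum>V\<in>P - {U}. b) < 2 * (real r - 1) * X" by (simp add: algebra_simps)
  have B: "(\<Sum>U\<in>P. \<Sum>V\<in>P - {U}. b) = real r * (real r - 1) * b"
  proof -
    have "(\<Sum>U\<in>P. \<Sum>V\<in>P - {U}. b) = (\<Sum>U\<in>P. (real r - 1) * b)"
    proof (rule sum.cong[OF refl])
      fix U assume U: "U \<in> P"
      have "card (P - {U}) = r - 1" unfolding r_def using U fin by simp
      then show "(\<Sum>V\<in>P - {U}. b) = (real r - 1) * b" using two unfolding r_def by (simp add: of_nat_diff)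
    qed
    then show ?thesis unfolding r_def by simp
  qed
  have rpos: "0 < real r - 1" using two unfolding r_def by simp
  from A B have "(real r - 1) * (real r * b) < (real r - 1) * (2 * X)" by (simp add: algebra_simps)
  then have "real r * b < 2 * X" using rpos by simp
  then show ?thesis unfolding r_def X_def .
qed


lemma pay_empty: "pay f c {} = 0" unfolding pay_def by simp

lemma feas_facts:
  assumes v: "valid_instance A f c"
  shows "finite {S. S \<subseteq> A \<and> pay f c S \<le> ereal x}" and "0 \<le> x \<Longrightarrow> {} \<in> {S. S \<subseteq> A \<and> pay f c S \<le> ereal x}"
proof -
  have "{S. S \<subseteq> A \<and> pay f c S \<le> ereal x} \<subseteq> Pow A" by blast
  then show "finite {S. S \<subseteq> A \<and> pay f c S \<le> ereal x}" using vi_fin[OF v] finite_subset by blast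
  show "0 \<le> x \<Longrightarrow> {} \<in> {S. S \<subseteq> A \<and> pay f c S \<le> ereal x}" by (simp add: pay_empty)
qed

lemma max_profit_ge:
  assumes v: "valid_instance A f c" and T: "T \<subseteq> A" and p: "pay f c T \<le> ereal x"
  shows "profit f c T \<le> max_profit A f c x"
  unfolding max_profit_def
  by (rule Max_ge) (use feas_facts(1)[OF v, of x] T p in auto)

lemma max_profit_in:
  assumes v: "valid_instance A f c" and x: "0 \<le> x"
  shows "\<exists>S. S \<subseteq> A \<and> pay f c S \<le> ereal x \<and> max_profit A f c x = profit f c S"
proof -
  have "max_profit A f c x \<in> profit f c ` {S. S \<subseteq> A \<and> pay f c S \<le> ereal x}"
    unfolding max_profit_def
    by (rule Max_in) (use feas_facts[OF v, of x] x in auto)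
  then show ?thesis by auto
qed

lemma profit_empty: "profit f c {} = f {}"
  unfolding profit_def by (simp add: pay_empty)

lemma ratio_upper:
  assumes v: "valid_instance A f c" and sm: "submodular_on A f" and cA: "card A \<le> n"
    and single: "\<forall>i\<in>A. pay f c {i} \<le> ereal b"
    and b: "0 < b" and bB: "b < B" and n2: "2 \<le> n"
  shows "max_profit A f c B / max_profit A f c b \<le> real_of_int (min (\<lceil>2 * B / b\<rceil> - 1) (int n))"
proof -
  define K where "K = real_of_int (min (\<lceil>2 * B / b\<rceil> - 1) (int n))"
  define Mb where "Mb = max_profit A f c b"
  have x2: "2 < 2 * B / b" using b bB by (simp add: field_simps)
  then have "2 < \<lceil>2 * B / b\<rceil>" using x2 by (simp add: less_ceiling_iff)
  then have K1: "1 \<le> K" unfolding K_def using n2 by simp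
  have Mb: "\<And>T. T \<subseteq> A \<Longrightarrow> pay f c T \<le> ereal b \<Longrightarrow> profit f c T \<le> Mb"
    unfolding Mb_def using max_profit_ge[OF v] by blast
  have Mb0: "f {} \<le> Mb" using Mb[of "{}"] b by (simp add: pay_empty profit_empty)
  have "0 \<le> f {}" using vi_range[OF v] by blast
  then have Mb00: "0 \<le> Mb" using Mb0 by simp
  obtain S where S: "S \<subseteq> A" and pS: "pay f c S \<le> ereal B" and MB: "max_profit A f c B = profit f c S"
    using max_profit_in[OF v, of B] b bB by auto
  show ?thesis
  proof (cases "Mb = 0")
    case True
    then show ?thesis using K1 unfolding Mb_def K_def by simp
  next
    case False
    then have Mbpos: "0 < Mb" using Mb00 by simp
    have main: "profit f c S \<le> K * Mb"
    proof (cases "S = {}")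
      case True
      then have "profit f c S \<le> Mb" using Mb0 by (simp add: profit_empty)
      also have "\<dots> \<le> K * Mb" using K1 Mbpos by simp
      finally show ?thesis .
    next
      case Sne: False
      define w where "w = wt f c S"
      have fS: "finite S" using vi_fin[OF v] S finite_subset by blast
      have pf: "pay f c S \<noteq> \<infinity>" using pS by auto
      have sumB: "sum w S \<le> B" using pay_eq_wt[OF v S pf] pS unfolding w_def by simp
      define P1 where "P1 = (\<lambda>i. {i}) ` S"
      have ok1: "okpart S w b P1"
      proof -
        have "finite P1" unfolding P1_def using fS by simp
        moreover have "\<forall>U\<in>P1. U \<subseteq> S" unfolding P1_def by blast
        moreover have "\<Union>P1 = S" unfolding P1_def by blast
        moreover have "\<forall>U\<in>P1. \<forall>V\<in>P1. U \<noteq> V \<longrightarrow> U \<inter> V = {}" unfolding P1_def by blast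
        moreover have "\<forall>U\<in>P1. card U = 1 \<or> sum w U \<le> b" unfolding P1_def by simp
        ultimately show ?thesis unfolding okpart_def by blast
      qed
      have cP1: "card P1 = card S" unfolding P1_def by (simp add: card_image inj_on_def)
      have cS: "card S \<le> n" using card_mono[OF vi_fin[OF v] S] cA by simp
      have bound1: "profit f c S \<le> real n * Mb"
      proof -
        have "profit f c S \<le> real (card P1) * Mb"
          using part_bound[OF v sm S pS Sne _ single Mb] ok1 unfolding w_def by blast
        also have "\<dots> \<le> real n * Mb" using cP1 cS Mbpos by (simp add: mult_right_mono)
        finally show ?thesis .
      qed
      obtain P2 where ok2: "okpart S w b P2" and pr: "\<forall>U\<in>P2. \<forall>V\<in>P2. U \<noteq> V \<longrightarrow> b < sum w U + sum w V"
        using merge_exists[OF fS ok1] by blast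
      have P2fin: "finite P2" and P2sub: "\<forall>U\<in>P2. U \<subseteq> S" and P2U: "\<Union>P2 = S"
        and P2dj: "\<forall>U\<in>P2. \<forall>V\<in>P2. U \<noteq> V \<longrightarrow> U \<inter> V = {}"
        using ok2 unfolding okpart_def by blast+
      have cP2: "real (card P2) < 2 * B / b"
      proof (cases "2 \<le> card P2")
        case True
        have "real (card P2) * b < 2 * sum (sum w) P2" using pair_count[OF P2fin True pr] .
        also have "sum (sum w) P2 = sum w S"
        proof -
          have Ufin: "\<forall>U\<in>P2. finite U" using P2sub fS finite_subset by blast
          show ?thesis using sum.Union_disjoint[OF Ufin P2dj, of w] P2U by simp
        qed
        finally have "real (card P2) * b < 2 * B" using sumB by linarith
        then show ?thesis using b by (simp add: field_simps)
      next
        case False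
        then have "real (card P2) \<le> 1" by simp
        then show ?thesis using x2 by linarith
      qed
      have "real (card P2) < real_of_int \<lceil>2 * B / b\<rceil>"
        using cP2 le_of_int_ceiling less_le_trans by blast
      then have cP2i: "int (card P2) \<le> \<lceil>2 * B / b\<rceil> - 1" by linarith
      have bound2: "profit f c S \<le> real (card P2) * Mb"
        using part_bound[OF v sm S pS Sne _ single Mb] ok2 unfolding w_def by blast
      show ?thesis
      proof (cases "\<lceil>2 * B / b\<rceil> - 1 \<le> int n")
        case True
        then have "K = real_of_int (\<lceil>2 * B / b\<rceil> - 1)" unfolding K_def by simp
        moreover have "real (card P2) \<le> real_of_int (\<lceil>2 * B / b\<rceil> - 1)" using cP2i by linarith
        ultimately have "real (card P2) * Mb \<le> K * Mb" using Mbpos by (simp add: mult_right_mono)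
        then show ?thesis using bound2 by linarith
      next
        case False
        then have "K = real n" unfolding K_def by simp
        then show ?thesis using bound1 by simp
      qed
    qed
    have "profit f c S / Mb \<le> K" using main Mbpos by (simp add: pos_divide_le_eq)
    then show ?thesis using MB unfolding Mb_def K_def by simp
  qed
qed



lemma sub01: "T \<subseteq> {0,1::nat} \<Longrightarrow> T = {} \<or> T = {0} \<or> T = {1} \<or> T = {0,1}"
proof -
  assume "T \<subseteq> {0,1::nat}"
  then have "T \<in> Pow {0,1}" by simp
  then show ?thesis by (simp add: Pow_insert) blast
qed

lemma inst2:
  fixes b B e :: real
  assumes b: "0 < b" and bB: "b < B" and B1: "B \<le> 1" and n2: "2 \<le> n"
    and e: "0 < e" and e1: "e \<le> 1 - b" and e2: "b * (1 + e) \<le> B"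
  shows "ereal ((1 - b * (1 + e)) / ((1 - b) * (1 + e) / (2 - b))) \<le> pof_profit_submodular n b B"
proof -
  define m where "m = 1 / (2 - b)"
  define a where "a = m * (1 + e)"
  define A where "A = {0, 1::nat}"
  define f where "f = (\<lambda>T::nat set. if 0 \<in> T \<and> 1 \<in> T then 1 else if 0 \<in> T then a else if 1 \<in> T then 1 - m else 0)"
  define c where "c = (\<lambda>i::nat. if i = 0 then b * a else 0)"
  have b1: "b < 1" using bB B1 by simp
  have m0: "0 < m" "m < 1" unfolding m_def using b b1 by (simp_all add: field_simps)
  have am: "m < a" unfolding a_def using m0 e by simp
  have a1: "a \<le> 1" unfolding a_def m_def using e1 b1 by (simp add: field_simps)
  have m1: "1 - m = (1 - b) * m" unfolding m_def using b1 by (simp add: field_simps)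
  have v: "valid_instance A f c"
    unfolding valid_instance_def
  proof (intro conjI allI impI ballI)
    show "finite A" unfolding A_def by simp
  next
    fix S assume "S \<subseteq> A"
    then show "0 \<le> f S" "f S \<le> 1" unfolding f_def using m0 am a1 by auto
  next
    fix S T assume "S \<subseteq> T \<and> T \<subseteq> A"
    then have ST: "S \<subseteq> T" and T: "T \<subseteq> {0,1}" unfolding A_def by auto
    then have S: "S \<subseteq> {0,1}" by blast
    show "f S \<le> f T"
      using sub01[OF S] sub01[OF T] ST m0 am a1 unfolding f_def by auto
  next
    fix i assume "i \<in> A"
    show "0 \<le> c i" unfolding c_def using b am m0 by simp
  qed
  have sm: "submodular_on A f"
    unfolding submodular_on_def
  proof (intro allI impI)
    fix S S' i assume H: "S \<subseteq> S' \<and> S' \<subseteq> A \<and> i \<in> S"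
    then have S': "S' \<subseteq> {0,1}" and SS: "S \<subseteq> S'" and i: "i \<in> S" unfolding A_def by auto
    then have S: "S \<subseteq> {0,1}" by blast
    show "marg f S' i \<le> marg f S i"
      using sub01[OF S] sub01[OF S'] SS i m0 am a1 unfolding marg_def f_def by auto
  qed
  have ne: "a \<noteq> 0" "m \<noteq> 0" "1 - m \<noteq> 0" using m0 am by auto
  have p0: "pay f c {0} = ereal b"
    unfolding pay_def marg_def f_def c_def using ne by simp
  have p1: "pay f c {1} = 0"
    unfolding pay_def marg_def f_def c_def using ne by simp
  have p01: "pay f c {0,1} = ereal (b * (1 + e))"
  proof -
    have "pay f c {0,1} = ereal (b * a / m)"
      unfolding pay_def marg_def f_def c_def using ne by simp
    also have "b * a / m = b * (1 + e)" unfolding a_def using ne by simp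
    finally show ?thesis .
  qed
  have f0: "f {0} = a" "f {1} = 1 - m" "f {0,1} = 1" "f {} = 0" unfolding f_def by simp_all
  have pr0: "profit f c {0} = (1 - b) * a" unfolding profit_def p0 f0 by simp
  have pr1: "profit f c {1} = 1 - m" unfolding profit_def p1 f0 by simp
  have pr01: "profit f c {0,1} = 1 - b * (1 + e)" unfolding profit_def p01 f0 by simp
  have pre: "profit f c {} = 0" unfolding profit_empty f0 by simp
  define Mb where "Mb = max_profit A f c b"
  define MB where "MB = max_profit A f c B"
  have Mbge: "(1 - b) * a \<le> Mb"
    using max_profit_ge[OF v, of "{0}" b] p0 pr0 unfolding Mb_def A_def by simp
  have Mble: "Mb \<le> (1 - b) * a"
  proof -
    obtain S where S: "S \<subseteq> A" and pS: "pay f c S \<le> ereal b" and eq: "Mb = profit f c S"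
      using max_profit_in[OF v, of b] b unfolding Mb_def by auto
    have "S \<noteq> {0,1}" using pS p01 e b by auto
    then have "S = {} \<or> S = {0} \<or> S = {1}" using sub01[of S] S unfolding A_def by blast
    moreover have "1 - m \<le> (1 - b) * a" using m1 am b1 by (simp add: mult_left_mono)
    moreover have "0 \<le> (1 - b) * a" using am m0 b1 by simp
    ultimately show ?thesis using eq pr0 pr1 pre by auto
  qed
  have MBge: "1 - b * (1 + e) \<le> MB"
    using max_profit_ge[OF v, of "{0,1}" B] p01 pr01 e2 unfolding MB_def A_def by simp
  have Mbpos: "0 < (1 - b) * a" using am m0 b1 by simp
  have Mbeq: "Mb = (1 - b) * a" using Mbge Mble by simp
  have ratio: "(1 - b * (1 + e)) / ((1 - b) * (1 + e) / (2 - b)) \<le> MB / Mb"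
  proof -
    have "(1 - b) * (1 + e) / (2 - b) = (1 - b) * a" unfolding a_def m_def by simp
    then show ?thesis using Mbeq Mbpos MBge by (simp add: divide_right_mono)
  qed
  have inI: "(A, f, c) \<in> {(A, f, c). valid_instance A f c \<and> submodular_on A f \<and> card A \<le> n
                \<and> (\<forall>i\<in>A. pay f c {i} \<le> ereal b)}"
    using v sm n2 p0 p1 b unfolding A_def by auto
  have "ereal (MB / Mb) \<le> pof_profit_submodular n b B"
    unfolding pof_profit_submodular_def MB_def Mb_def
    by (rule SUP_upper2[OF inI]) simp
  then show ?thesis using ratio by (meson ereal_less_eq(3) order_trans)
qed


lemma inst1:
  fixes b B e :: real and k n :: nat
  assumes b: "0 < b" and bB: "b < B" and B1: "B \<le> 1" and k1: "1 \<le> k" and kn: "k \<le> n"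
    and e: "0 < e" and e1: "e \<le> 1" and eB: "real k * (b * (1 + e) / 2) \<le> B"
  shows "ereal (real k * (1 - real k * (b * (1 + e) / 2)) / (1 - b * (1 + e) / 2)) \<le> pof_profit_submodular n b B"
proof -
  define \<beta> where "\<beta> = b * (1 + e) / 2"
  define A where "A = {..<k}"
  define f where "f = (\<lambda>T::nat set. real (card T) / real k)"
  define c where "c = (\<lambda>i::nat. \<beta> / real k)"
  have b1: "b < 1" using bB B1 by simp
  have kpos: "0 < real k" using k1 by simp
  have be1: "\<beta> < 1" unfolding \<beta>_def using b1 e1 b by (simp add: field_simps) (smt (verit) mult_le_cancel_left2)
  have beb: "\<beta> \<le> b" unfolding \<beta>_def using b e1 by (simp add: field_simps)
  have be2: "b < 2 * \<beta>" unfolding \<beta>_def using b e by (simp add: field_simps)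
  have be0: "0 < \<beta>" unfolding \<beta>_def using b e by simp
  have fA: "finite A" unfolding A_def by simp
  have v: "valid_instance A f c"
    unfolding valid_instance_def
  proof (intro conjI allI impI ballI)
    show "finite A" by (rule fA)
  next
    fix S assume S: "S \<subseteq> A"
    have "card S \<le> k" using card_mono[OF fA S] unfolding A_def by simp
    then show "0 \<le> f S" "f S \<le> 1" unfolding f_def using kpos by (simp_all add: field_simps)
  next
    fix S T assume "S \<subseteq> T \<and> T \<subseteq> A"
    then have "card S \<le> card T" using card_mono fA finite_subset by metis
    then show "f S \<le> f T" unfolding f_def using kpos by (simp add: divide_right_mono)
  next
    fix i assume "i \<in> A"
    show "0 \<le> c i" unfolding c_def using be0 kpos by simp
  qed
  have marg: "marg f S i = 1 / real k" if S: "S \<subseteq> A" and i: "i \<in> S" for S i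
  proof -
    have fS: "finite S" using S fA finite_subset by blast
    have "card S \<ge> 1" using i fS card_0_eq by fastforce
    moreover have "card (S - {i}) = card S - 1" using i fS by simp
    ultimately have "real (card S) - real (card (S - {i})) = 1" by (simp add: of_nat_diff)
    then show ?thesis unfolding marg_def f_def by (simp add: diff_divide_distrib[symmetric])
  qed
  have sm: "submodular_on A f"
    unfolding submodular_on_def
  proof (intro allI impI)
    fix S S' i assume H: "S \<subseteq> S' \<and> S' \<subseteq> A \<and> i \<in> S"
    then have "S \<subseteq> A" "i \<in> S'" "S' \<subseteq> A" "i \<in> S" by auto
    then show "marg f S' i \<le> marg f S i" using marg[of S i] marg[of S' i] by simp
  qed
  have pay: "pay f c S = ereal (real (card S) * \<beta>)" if S: "S \<subseteq> A" for S
  proof -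
    have "pay f c S = (\<Sum>i\<in>S. ereal \<beta>)"
      unfolding pay_def
    proof (rule sum.cong[OF refl])
      fix i assume i: "i \<in> S"
      have "marg f S i = 1 / real k" using marg[OF S i] .
      then show "(if marg f S i = 0 then if c i = 0 then 0 else \<infinity> else ereal (c i / marg f S i)) = ereal \<beta>"
        unfolding c_def using kpos by simp
    qed
    also have "\<dots> = ereal (real (card S) * \<beta>)" by (simp add: sum_ereal)
    finally show ?thesis .
  qed
  have profit: "profit f c S = (1 - real (card S) * \<beta>) * (real (card S) / real k)" if S: "S \<subseteq> A" for S
  proof -
    have "f S = real (card S) / real k" by (simp add: f_def)
    then show ?thesis unfolding profit_def pay[OF S] by simp
  qed
  define Mb where "Mb = max_profit A f c b"
  define MB where "MB = max_profit A f c B"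
  have A0: "{0} \<subseteq> A" unfolding A_def using k1 by auto
  have Mbge: "(1 - \<beta>) / real k \<le> Mb"
    using max_profit_ge[OF v A0, of b] pay[OF A0] profit[OF A0] beb unfolding Mb_def by simp
  have Mble: "Mb \<le> (1 - \<beta>) / real k"
  proof -
    obtain S where S: "S \<subseteq> A" and pS: "pay f c S \<le> ereal b" and eq: "Mb = profit f c S"
      using max_profit_in[OF v, of b] b unfolding Mb_def by auto
    have "real (card S) * \<beta> \<le> b" using pS pay[OF S] by simp
    then have "card S \<le> 1"
    proof -
      assume h: "real (card S) * \<beta> \<le> b"
      show "card S \<le> 1"
      proof (rule ccontr)
        assume "\<not> card S \<le> 1"
        then have "2 \<le> real (card S)" by simp
        then have "2 * \<beta> \<le> real (card S) * \<beta>" using be0 by (simp add: mult_right_mono)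
        then show False using h be2 by simp
      qed
    qed
    then have "card S = 0 \<or> card S = 1" by auto
    then show ?thesis
    proof
      assume "card S = 0"
      then show ?thesis using eq profit[OF S] be1 kpos by simp
    next
      assume "card S = 1"
      then show ?thesis using eq profit[OF S] by simp
    qed
  qed
  have cA: "card A = k" unfolding A_def by simp
  have MBge: "1 - real k * \<beta> \<le> MB"
    using max_profit_ge[OF v _ , of A B] pay[of A] profit[of A] eB cA kpos unfolding MB_def \<beta>_def by simp
  have Mbpos: "0 < (1 - \<beta>) / real k" using be1 kpos by simp
  have Mbeq: "Mb = (1 - \<beta>) / real k" using Mbge Mble by simp
  have ratio: "real k * (1 - real k * \<beta>) / (1 - \<beta>) \<le> MB / Mb"
  proof -
    have "real k * (1 - real k * \<beta>) / (1 - \<beta>) = (1 - real k * \<beta>) / ((1 - \<beta>) / real k)"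
      using kpos by simp
    moreover have "(1 - real k * \<beta>) / ((1 - \<beta>) / real k) \<le> MB / ((1 - \<beta>) / real k)"
      using Mbpos MBge by (rule divide_right_mono[OF _ less_imp_le, rotated])
    ultimately show ?thesis using Mbeq by (simp add: mult.commute)
  qed
  have inI: "(A, f, c) \<in> {(A, f, c). valid_instance A f c \<and> submodular_on A f \<and> card A \<le> n
                \<and> (\<forall>i\<in>A. pay f c {i} \<le> ereal b)}"
  proof -
    have "\<forall>i\<in>A. pay f c {i} \<le> ereal b" using pay beb by simp
    then show ?thesis using v sm cA kn by auto
  qed
  have "ereal (MB / Mb) \<le> pof_profit_submodular n b B"
    unfolding pof_profit_submodular_def MB_def Mb_def
    by (rule SUP_upper2[OF inI]) simp
  then show ?thesis using ratio unfolding \<beta>_def by (meson ereal_less_eq(3) order_trans)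
qed


lemma lim_lower:
  fixes r :: "nat \<Rightarrow> real"
  assumes le: "\<And>j. ereal (r j) \<le> P" and lim: "r \<longlonglongrightarrow> L"
  shows "ereal L \<le> P"
proof -
  have "(\<lambda>j. ereal (r j)) \<longlonglongrightarrow> ereal L" using lim by simp
  then show ?thesis by (rule LIMSEQ_le_const2) (use le in blast)
qed

lemma eps_seq:
  fixes d :: real
  assumes "0 < d"
  shows "(\<lambda>j. d * inverse (real (Suc j))) \<longlonglongrightarrow> 0"
    and "\<And>j. 0 < d * inverse (real (Suc j))" and "\<And>j. d * inverse (real (Suc j)) \<le> d"
proof -
  show "(\<lambda>j. d * inverse (real (Suc j))) \<longlonglongrightarrow> 0"
    using tendsto_mult[OF tendsto_const LIMSEQ_inverse_real_of_nat, of d] by simp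
  fix j
  show "0 < d * inverse (real (Suc j))" using assms by simp
  have "inverse (real (Suc j)) \<le> 1" by (simp add: inverse_le_1_iff)
  then show "d * inverse (real (Suc j)) \<le> d" using assms by (simp add: mult_left_le)
qed

lemma lower_a:
  fixes b B :: real
  assumes b: "0 < b" and bB: "b < B" and B1: "B \<le> 1" and n2: "2 \<le> n"
  shows "ereal (2 - b) \<le> pof_profit_submodular n b B"
proof -
  have b1: "b < 1" using bB B1 by simp
  define d where "d = min (1 - b) (B / b - 1)"
  have d0: "0 < d" unfolding d_def using b1 b bB by (simp add: field_simps)
  define e where "e = (\<lambda>j. d * inverse (real (Suc j)))"
  have elim: "e \<longlonglongrightarrow> 0" and e0: "\<And>j. 0 < e j" and ed: "\<And>j. e j \<le> d"
    using eps_seq[OF d0] unfolding e_def by auto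
  show ?thesis
  proof (rule lim_lower)
    fix j
    have "e j \<le> 1 - b" using ed[of j] unfolding d_def by simp
    moreover have "b * (1 + e j) \<le> B"
    proof -
      have "e j \<le> B / b - 1" using ed[of j] unfolding d_def by simp
      then have "1 + e j \<le> B / b" by simp
      then show ?thesis using b by (simp add: field_simps)
    qed
    ultimately show "ereal ((1 - b * (1 + e j)) / ((1 - b) * (1 + e j) / (2 - b))) \<le> pof_profit_submodular n b B"
      using inst2[OF b bB B1 n2 e0] by blast
  next
    have "(\<lambda>j. (1 - b * (1 + e j)) / ((1 - b) * (1 + e j) / (2 - b))) \<longlonglongrightarrow>
          (1 - b * (1 + 0)) / ((1 - b) * (1 + 0) / (2 - b))"
      using b1 by (intro tendsto_intros elim) (auto simp: field_simps)
    also have "(1 - b * (1 + 0)) / ((1 - b) * (1 + 0) / (2 - b)) = 2 - b" using b1 by simp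
    finally show "(\<lambda>j. (1 - b * (1 + e j)) / ((1 - b) * (1 + e j) / (2 - b))) \<longlonglongrightarrow> 2 - b" .
  qed
qed

lemma lower_b:
  fixes b B :: real and k n :: nat
  assumes b: "0 < b" and bB: "b < B" and B1: "B \<le> 1" and k1: "1 \<le> k" and kn: "k \<le> n"
    and kB: "real k * b < 2 * B"
  shows "ereal (real k * (2 - real k * b) / (2 - b)) \<le> pof_profit_submodular n b B"
proof -
  have b1: "b < 1" using bB B1 by simp
  have kpos: "0 < real k" using k1 by simp
  define d where "d = min 1 (2 * B / (real k * b) - 1)"
  have d0: "0 < d" unfolding d_def using kB kpos b by (simp add: field_simps)
  define e where "e = (\<lambda>j. d * inverse (real (Suc j)))"
  have elim: "e \<longlonglongrightarrow> 0" and e0: "\<And>j. 0 < e j" and ed: "\<And>j. e j \<le> d"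
    using eps_seq[OF d0] unfolding e_def by auto
  show ?thesis
  proof (rule lim_lower)
    fix j
    have "e j \<le> 1" using ed[of j] unfolding d_def by simp
    moreover have "real k * (b * (1 + e j) / 2) \<le> B"
    proof -
      have "e j \<le> 2 * B / (real k * b) - 1" using ed[of j] unfolding d_def by simp
      then have "1 + e j \<le> 2 * B / (real k * b)" by simp
      then have "(1 + e j) * (real k * b) \<le> 2 * B" using kpos b by (simp add: field_simps)
      then show ?thesis by (simp add: algebra_simps)
    qed
    ultimately show "ereal (real k * (1 - real k * (b * (1 + e j) / 2)) / (1 - b * (1 + e j) / 2)) \<le> pof_profit_submodular n b B"
      using inst1[OF b bB B1 k1 kn e0] by blast
  next
    have "(\<lambda>j. real k * (1 - real k * (b * (1 + e j) / 2)) / (1 - b * (1 + e j) / 2)) \<longlonglongrightarrow>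
          real k * (1 - real k * (b * (1 + 0) / 2)) / (1 - b * (1 + 0) / 2)"
      using b1 by (intro tendsto_intros elim) (auto simp: field_simps)
    also have "real k * (1 - real k * (b * (1 + 0) / 2)) / (1 - b * (1 + 0) / 2) = real k * (2 - real k * b) / (2 - b)"
      using b1 by (simp add: field_simps)
    finally show "(\<lambda>j. real k * (1 - real k * (b * (1 + e j) / 2)) / (1 - b * (1 + e j) / 2)) \<longlonglongrightarrow> real k * (2 - real k * b) / (2 - b)" .
  qed
qed


theorem mainTheorem16:
  fixes b B :: real and n :: nat
  assumes "0 < b" and "b < B" and "B \<le> 1" and "n \<ge> 2"
  defines "k \<equiv> min (min \<lfloor>1 / b + 1 / 2\<rfloor> (\<lceil>2 * B / b\<rceil> - 1)) (int n)"
  shows "ereal (max (2 - b) (real_of_int k * (2 - real_of_int k * b) / (2 - b)))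
           \<le> pof_profit_submodular n b B
         \<and> pof_profit_submodular n b B
           \<le> ereal (real_of_int (min (\<lceil>2 * B / b\<rceil> - 1) (int n)))"
proof
  note b = assms(1) and bB = assms(2) and B1 = assms(3) and n2 = assms(4)
  have b1: "b < 1" using bB B1 by simp
  show "pof_profit_submodular n b B \<le> ereal (real_of_int (min (\<lceil>2 * B / b\<rceil> - 1) (int n)))"
    unfolding pof_profit_submodular_def
  proof (rule SUP_least)
    fix I assume "I \<in> {(A, f, c). valid_instance A f c \<and> submodular_on A f \<and> card A \<le> n
                \<and> (\<forall>i\<in>A. pay f c {i} \<le> ereal b)}"
    then obtain A f c where I: "I = (A, f, c)" and v: "valid_instance A f c" and sm: "submodular_on A f"
      and cA: "card A \<le> n" and single: "\<forall>i\<in>A. pay f c {i} \<le> ereal b" by blast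
    have "max_profit A f c B / max_profit A f c b \<le> real_of_int (min (\<lceil>2 * B / b\<rceil> - 1) (int n))"
      using ratio_upper[OF v sm cA single b bB n2] .
    then show "(case I of (A, f, c) \<Rightarrow> ereal (max_profit A f c B / max_profit A f c b))
               \<le> ereal (real_of_int (min (\<lceil>2 * B / b\<rceil> - 1) (int n)))"
      unfolding I by simp
  qed
  have la: "ereal (2 - b) \<le> pof_profit_submodular n b B" using lower_a[OF b bB B1 n2] .
  have lb: "ereal (real_of_int k * (2 - real_of_int k * b) / (2 - b)) \<le> pof_profit_submodular n b B"
  proof -
    have x2: "2 < 2 * B / b" using b bB by (simp add: field_simps)
    have f1: "1 \<le> \<lfloor>1 / b + 1 / 2\<rfloor>"
    proof -
      have "1 < 1 / b" using b b1 by (simp add: field_simps)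
      then show ?thesis by (simp add: le_floor_iff)
    qed
    have c2: "2 \<le> \<lceil>2 * B / b\<rceil> - 1"
    proof -
      have "2 < \<lceil>2 * B / b\<rceil>" using x2 by (simp add: less_ceiling_iff)
      then show ?thesis by simp
    qed
    have k1: "1 \<le> k" unfolding k_def using f1 c2 n2 by simp
    have kc: "k \<le> \<lceil>2 * B / b\<rceil> - 1" unfolding k_def by simp
    have kn: "k \<le> int n" unfolding k_def by simp
    have klt: "real_of_int k < 2 * B / b"
    proof (rule ccontr)
      assume "\<not> real_of_int k < 2 * B / b"
      then have "2 * B / b \<le> real_of_int k" by simp
      then have "\<lceil>2 * B / b\<rceil> \<le> k" by (simp add: ceiling_le_iff)
      then show False using kc by simp
    qed
    define kk where "kk = nat k"
    have kk: "real kk = real_of_int k" unfolding kk_def using k1 by simp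
    have kk1: "1 \<le> kk" unfolding kk_def using k1 by simp
    have kkn: "kk \<le> n" unfolding kk_def using kn by simp
    have kkB: "real kk * b < 2 * B" using klt b kk by (simp add: field_simps)
    show ?thesis using lower_b[OF b bB B1 kk1 kkn kkB] kk by simp
  qed
  show "ereal (max (2 - b) (real_of_int k * (2 - real_of_int k * b) / (2 - b))) \<le> pof_profit_submodular n b B"
  proof (cases "2 - b \<le> real_of_int k * (2 - real_of_int k * b) / (2 - b)")
    case True
    then show ?thesis using lb by (simp add: max_def)
  next
    case False
    then show ?thesis using la by (simp add: max_def)
  qed
qed

end
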